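(* Let $N\ge4$, $n=N-1$, $\epsilon>0$, let $\pi=(\pi_{ij})$ be a trace-free symmetric real $n\times n$ matrix, and let $a_1,a_2\in\mathbb{R}$. Define on $\mathbb{R}^N_+$ \[\Phi(x)=\frac{\epsilon\,\pi_{ij}x_ix_j}{(|\bar x|^2+(x_N+1)^2)^{\frac N2}}\Big[\Big(\frac{N-2}{2}\Big)(x_N-1)+\frac{a_1(x_N+1)}{(|\bar x|^2+(x_N+1)^2)^2}+\frac{a_2}{|\bar x|^2+(x_N+1)^2}\Big].\] Then $-\Delta\Phi=2\epsilon\,\pi_{ij}\,x_N\,\partial_{ij}W_{1,0}$ in $\mathbb{R}^N_+$.
   Context: $\mathbb{R}^N_+=\{x=(\bar x,x_N):\bar x\in\mathbb{R}^n,\ x_N>0\}$. $W_{1,0}(x)=(|\bar x|^2+(x_N+1)^2)^{-\frac{N-2}{2}}$. Repeated indices $i,j$ are summed from $1$ to $n$. *)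

theory Defs
  imports "HOL-Analysis.Analysis"
begin

text \<open>Points of the half-space R^N_+ are pairs (xbar, xN) with xbar in R^n, n = CARD('n),
  N = n + 1.\<close>

definition pdiff :: "('a::real_normed_vector \<Rightarrow> real) \<Rightarrow> 'a \<Rightarrow> 'a \<Rightarrow> real" where
  "pdiff f e x = deriv (\<lambda>t. f (x + t *\<^sub>R e)) 0"

definition laplacian :: "('a::euclidean_space \<Rightarrow> real) \<Rightarrow> 'a \<Rightarrow> real" where
  "laplacian f x = (\<Sum>b\<in>Basis. pdiff (\<lambda>y. pdiff f b y) b x)"

definition ebar :: "'n::finite \<Rightarrow> (real^'n) \<times> real" where
  "ebar i = (axis i 1, 0)"

definition W10 :: "(real^'n::finite) \<times> real \<Rightarrow> real" where
  "W10 x = (norm (fst x) ^ 2 + (snd x + 1) ^ 2) powr (- ((real CARD('n) + 1) - 2) / 2)"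

definition Phi :: "real \<Rightarrow> real^'n^'n \<Rightarrow> real \<Rightarrow> real \<Rightarrow> (real^'n::finite) \<times> real \<Rightarrow> real" where
  "Phi \<epsilon> \<pi> a1 a2 x =
     (let N = (real CARD('n) + 1); xb = fst x; xN = snd x;
          \<rho> = norm xb ^ 2 + (xN + 1) ^ 2 in
      \<epsilon> * (\<Sum>i\<in>UNIV. \<Sum>j\<in>UNIV. \<pi> $ i $ j * xb $ i * xb $ j) / \<rho> powr (N / 2)
        * ((N - 2) / 2 * (xN - 1) + a1 * (xN + 1) / \<rho> ^ 2 + a2 / \<rho>))"

end

theory Submission
  imports Defs
begin



lemma pdiff_same:
  "pdiff (\<lambda>y. pdiff f b y) b x = deriv (deriv (\<lambda>t. f (x + t *\<^sub>R b))) 0"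
proof -
  have "(\<lambda>t. pdiff f b (x + t *\<^sub>R b)) = deriv (\<lambda>t. f (x + t *\<^sub>R b))"
  proof
    fix t
    have "deriv (\<lambda>t. f (x + t *\<^sub>R b)) t = deriv ((\<lambda>t. f (x + t *\<^sub>R b)) \<circ> (\<lambda>s. t + s)) 0"
      by (rule deriv_shift_0)
    also have "((\<lambda>t. f (x + t *\<^sub>R b)) \<circ> (\<lambda>s. t + s)) = (\<lambda>s. f (x + t *\<^sub>R b + s *\<^sub>R b))"
      by (auto simp: o_def scaleR_add_left add.assoc)
    finally show "pdiff f b (x + t *\<^sub>R b) = deriv (\<lambda>t. f (x + t *\<^sub>R b)) t"
      by (simp add: pdiff_def)
  qed
  then show ?thesis by (simp add: pdiff_def)
qed

lemma Basis_vec_real: "(Basis :: (real^'n::finite) set) = range (\<lambda>i. axis i 1)"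
  by (auto simp: Basis_vec_def)

lemma sum_Basis_vec_real: "(\<Sum>b\<in>(Basis :: (real^'n::finite) set). f b) = (\<Sum>i\<in>UNIV. f (axis i 1))"
  unfolding Basis_vec_real
  by (subst sum.reindex) (auto simp: inj_on_def axis_eq_axis)

lemma sum_Basis_prod_gen:
  fixes f::"('a::euclidean_space*'b::euclidean_space)\<Rightarrow>real"
  shows "sum f Basis = sum (\<lambda>i. f (i, 0)) Basis + sum (\<lambda>i. f (0, i)) Basis"
proof -
  have "inj_on (\<lambda>u. (u::'a, 0::'b)) Basis" "inj_on (\<lambda>u. (0::'a, u::'b)) Basis"
    by (auto intro!: inj_onI Pair_inject)
  thus ?thesis
    unfolding Basis_prod_def
    by (subst sum.union_disjoint) (auto simp: Basis_prod_def sum.reindex)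
qed

lemma laplacian_split:
  fixes f :: "(real^'n::finite) \<times> real \<Rightarrow> real"
  shows "laplacian f x = (\<Sum>i\<in>UNIV. deriv (deriv (\<lambda>t. f (x + t *\<^sub>R ebar i))) 0)
     + deriv (deriv (\<lambda>t. f (x + t *\<^sub>R (0, 1)))) 0"
  unfolding laplacian_def sum_Basis_prod_gen sum_Basis_vec_real pdiff_same ebar_def
  by simp

lemma second_deriv_line:
  fixes F F1 F2 :: "real \<Rightarrow> real"
  assumes d1: "\<And>p. p > 0 \<Longrightarrow> (F has_real_derivative F1 p) (at p)"
    and d2: "\<And>p. p > 0 \<Longrightarrow> (F1 has_real_derivative F2 p) (at p)"
    and pos: "\<And>t. R + 2*t*a + t^2 > 0"
  shows "deriv (deriv (\<lambda>t. e * (Q + t*c + t^2*d) * F (R + 2*t*a + t^2))) 0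
     = e * (2*d*F R + 4*a*c*F1 R + Q*(4*a^2*F2 R + 2*F1 R))"
proof -
  have "deriv (\<lambda>t. e * (Q + t*c + t^2*d) * F (R + 2*t*a + t^2))
     = (\<lambda>t. e * ((c + 2*t*d) * F (R + 2*t*a + t^2) + (Q + t*c + t^2*d) * (F1 (R + 2*t*a + t^2) * (2*a + 2*t))))"
  proof
    fix t
    show "deriv (\<lambda>t. e * (Q + t*c + t^2*d) * F (R + 2*t*a + t^2)) t = e * ((c + 2*t*d) * F (R + 2*t*a + t^2) + (Q + t*c + t^2*d) * (F1 (R + 2*t*a + t^2) * (2*a + 2*t)))"
      apply (rule DERIV_imp_deriv)
      apply (rule derivative_eq_intros DERIV_chain2[OF d1] refl pos | simp)+
      apply (simp add: algebra_simps)
      done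
  qed
  moreover have "deriv (\<lambda>t. e * ((c + 2*t*d) * F (R + 2*t*a + t^2) + (Q + t*c + t^2*d) * (F1 (R + 2*t*a + t^2) * (2*a + 2*t)))) 0
    = e * (2*d*F R + 4*a*c*F1 R + Q*(4*a^2*F2 R + 2*F1 R))"
    apply (rule DERIV_imp_deriv)
    apply (rule derivative_eq_intros DERIV_chain2[OF d1] DERIV_chain2[OF d2] refl pos | simp)+
    using pos[of 0] apply (simp add: algebra_simps power2_eq_square)
    done
  ultimately show ?thesis by simp
qed




lemma second_deriv_N:
  fixes H H1 H2 :: "real \<Rightarrow> real"
  assumes d1: "\<And>v. v > -1 \<Longrightarrow> (H has_real_derivative H1 v) (at v)"
    and d2: "(H1 has_real_derivative H2 xN) (at xN)"
    and xN: "xN > -1"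
  shows "deriv (deriv (\<lambda>t. e * Q * H (xN + t))) 0 = e * Q * H2 xN"
proof -
  have ev: "eventually (\<lambda>t. deriv (\<lambda>t. e * Q * H (xN + t)) t = e * Q * H1 (xN + t)) (nhds 0)"
  proof -
    have "eventually (\<lambda>t. t \<in> {-1 - xN<..}) (nhds (0::real))"
      using xN by (intro eventually_nhds_in_open) auto
    then show ?thesis
    proof (rule eventually_mono)
      fix t :: real assume "t \<in> {-1 - xN<..}"
      then show "deriv (\<lambda>t. e * Q * H (xN + t)) t = e * Q * H1 (xN + t)"
      proof (intro DERIV_imp_deriv)
        have "((\<lambda>x. H (xN + x)) has_real_derivative H1 (xN + t)) (at t)"
          using d1[of "xN+t"] DERIV_shift[of H _ t xN] \<open>t \<in> _\<close> by (simp add: add.commute)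
        from DERIV_cmult[OF this, of "e*Q"]
        show "((\<lambda>t. e * Q * H (xN + t)) has_real_derivative e * Q * H1 (xN + t)) (at t)" .
      qed
    qed
  qed
  have "deriv (deriv (\<lambda>t. e * Q * H (xN + t))) 0 = deriv (\<lambda>t. e * Q * H1 (xN + t)) 0"
    by (rule deriv_cong_ev[OF ev refl])
  also have "\<dots> = e * Q * H2 xN"
  proof (intro DERIV_imp_deriv)
    have "((\<lambda>x. H1 (xN + x)) has_real_derivative H2 xN) (at 0)"
      using d2 DERIV_shift[of H1 _ 0 xN] by (simp add: add.commute)
    from DERIV_cmult[OF this, of "e*Q"]
    show "((\<lambda>t. e * Q * H1 (xN + t)) has_real_derivative e * Q * H2 xN) (at 0)" .
  qed
  finally show ?thesis .
qed

lemma powr_deriv_al: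
  "p > 0 \<Longrightarrow> ((\<lambda>p::real. p powr al) has_real_derivative al * p powr al / p) (at p)"
  using has_real_derivative_powr[of p al] by (simp add: powr_diff)

lemma F_d1:
  assumes "p > 0"
  shows "((\<lambda>p. p powr al * (A + B / p^2 + C / p)) has_real_derivative
     p powr al * (al/p * (A + B/p^2 + C/p) - 2*B/p^3 - C/p^2)) (at p)"
  using assms
  apply -
  apply (rule derivative_eq_intros powr_deriv_al refl | simp)+
  apply (simp add: powr_diff divide_simps)
  apply algebra
  done

lemma F_d2:
  assumes "p > 0"
  shows "((\<lambda>p. p powr al * (al/p * (A + B/p^2 + C/p) - 2*B/p^3 - C/p^2)) has_real_derivative
     p powr al * (al/p*(al/p*(A + B/p^2 + C/p) - 2*B/p^3 - C/p^2) + (- al/p^2*(A + B/p^2 + C/p) + al/p*(- 2*B/p^3 - C/p^2) + 6*B/p^4 + 2*C/p^3))) (at p)"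
  using assms
  apply -
  apply (rule derivative_eq_intros refl | simp)+
  apply (simp add: powr_diff divide_simps)
  apply algebra
  done

lemma H_d1_gen:
  fixes g :: "real \<Rightarrow> real"
  assumes g: "(g has_real_derivative 2*(v+1)) (at v)" and pos: "g v > 0"
  shows "((\<lambda>v. g v powr al * (k*(v-1) + a1*(v+1)/(g v)^2 + a2/g v)) has_real_derivative
    g v powr al * (al*2*(v+1)/g v * (k*(v-1) + a1*(v+1)/(g v)^2 + a2/g v)
      + (k + a1/(g v)^2 - 4*a1*(v+1)^2/(g v)^3 - 2*a2*(v+1)/(g v)^2))) (at v)"
  using pos
  apply -
  apply (rule derivative_eq_intros g refl | simp)+
  apply (simp add: powr_diff divide_simps)
  apply algebra
  done

lemma H_d2_gen:
  fixes g :: "real \<Rightarrow> real"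
  assumes g: "(g has_real_derivative 2*(v+1)) (at v)" and pos: "g v > 0"
  shows "((\<lambda>v. g v powr al * (al*2*(v+1)/g v * (k*(v-1) + a1*(v+1)/(g v)^2 + a2/g v)
      + (k + a1/(g v)^2 - 4*a1*(v+1)^2/(g v)^3 - 2*a2*(v+1)/(g v)^2))) has_real_derivative
    g v powr al * (al*2*(v+1)/g v * (al*2*(v+1)/g v * (k*(v-1) + a1*(v+1)/(g v)^2 + a2/g v)
      + (k + a1/(g v)^2 - 4*a1*(v+1)^2/(g v)^3 - 2*a2*(v+1)/(g v)^2))
     + (al*(2/g v - 4*(v+1)^2/(g v)^2) * (k*(v-1) + a1*(v+1)/(g v)^2 + a2/g v)
        + al*2*(v+1)/g v * (k + a1/(g v)^2 - 4*a1*(v+1)^2/(g v)^3 - 2*a2*(v+1)/(g v)^2)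
        + (-12*a1*(v+1)/(g v)^3 + 24*a1*(v+1)^3/(g v)^4 - 2*a2/(g v)^2 + 8*a2*(v+1)^2/(g v)^3)))) (at v)"
  using pos
  apply -
  apply (rule derivative_eq_intros g refl | simp)+
  apply (simp add: powr_diff divide_simps)
  apply algebra
  done

lemma W_d1:
  "p > 0 \<Longrightarrow> ((\<lambda>p::real. p powr be) has_real_derivative be * p powr be / p) (at p)"
  using has_real_derivative_powr[of p be] by (simp add: powr_diff)

lemma W_d2:
  "p > 0 \<Longrightarrow> ((\<lambda>p::real. be * p powr be / p) has_real_derivative be*(be-1) * p powr be / p^2) (at p)"
  apply (rule derivative_eq_intros refl | simp)+
  apply (simp add: powr_diff divide_simps)
  apply algebra
  done




lemma norm_line:
  fixes xb :: "real^'n::finite"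
  shows "norm (xb + t *\<^sub>R axis i 1)^2 = norm xb^2 + 2*t*xb$i + t^2"
  unfolding power2_norm_eq_inner by (simp add: inner_add_left inner_add_right inner_axis inner_commute algebra_simps power2_eq_square)

lemma sum_if_out: "(\<Sum>l\<in>A. if P then f l else 0) = (if P then (\<Sum>l\<in>A. f l) else 0)"
  by auto

lemma quad_line:
  fixes xb :: "real^'n::finite" and \<pi> :: "real^'n^'n"
  shows "(\<Sum>k\<in>UNIV. \<Sum>l\<in>UNIV. \<pi>$k$l * (xb + t *\<^sub>R axis i 1)$k * (xb + t *\<^sub>R axis i 1)$l)
    = (\<Sum>k\<in>UNIV. \<Sum>l\<in>UNIV. \<pi>$k$l * xb$k * xb$l)
      + t * ((\<Sum>l\<in>UNIV. \<pi>$i$l * xb$l) + (\<Sum>k\<in>UNIV. \<pi>$k$i * xb$k)) + t^2 * \<pi>$i$i"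
proof -
  have e: "\<And>k. (xb + t *\<^sub>R axis i 1)$k = xb$k + (if k = i then t else 0)"
    by (simp add: axis_def)
  have "(\<Sum>k\<in>UNIV. \<Sum>l\<in>UNIV. \<pi>$k$l * (xb + t *\<^sub>R axis i 1)$k * (xb + t *\<^sub>R axis i 1)$l)
     = (\<Sum>k\<in>UNIV. \<Sum>l\<in>UNIV. \<pi>$k$l * xb$k * xb$l + (if l = i then t * (\<pi>$k$l * xb$k) else 0)
         + (if k = i then t * (\<pi>$k$l * xb$l) else 0) + (if k = i then (if l = i then t^2 * \<pi>$k$l else 0) else 0))"
    unfolding e by (intro sum.cong refl) (auto simp: algebra_simps power2_eq_square)
  also have "\<dots> = (\<Sum>k\<in>UNIV. \<Sum>l\<in>UNIV. \<pi>$k$l * xb$k * xb$l)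
      + t * ((\<Sum>l\<in>UNIV. \<pi>$i$l * xb$l) + (\<Sum>k\<in>UNIV. \<pi>$k$i * xb$k)) + t^2 * \<pi>$i$i"
    by (simp add: sum.distrib sum_distrib_left sum_if_out algebra_simps)
  finally show ?thesis .
qed


lemma final_poly:
  fixes R P r x n al be k a1 a2 iv :: real
  assumes Rs: "R * iv = 1" and rR: "r = R - (x+1)^2" and al: "al = -((n+1)/2)" and be: "be = al + 1" and k: "k = (n + 1 - 2)/2"
  shows "-((8 + 2*n) * (P*(al*iv*(k*(x-1) + a1*(x+1)*iv^2 + a2*iv) - 2*(a1*(x+1))*iv^3 - a2*iv^2))
     + 4*r*(P*(al*iv*(al*iv*(k*(x-1) + a1*(x+1)*iv^2 + a2*iv) - 2*(a1*(x+1))*iv^3 - a2*iv^2) + (- al*iv^2*(k*(x-1) + a1*(x+1)*iv^2 + a2*iv) + al*iv*(- 2*(a1*(x+1))*iv^3 - a2*iv^2) + 6*(a1*(x+1))*iv^4 + 2*a2*iv^3)))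
     + P * (al*2*(x+1)*iv * (al*2*(x+1)*iv * (k*(x-1) + a1*(x+1)*iv^2 + a2*iv)
      + (k + a1*iv^2 - 4*a1*(x+1)^2*iv^3 - 2*a2*(x+1)*iv^2))
     + (al*(2*iv - 4*(x+1)^2*iv^2) * (k*(x-1) + a1*(x+1)*iv^2 + a2*iv)
        + al*2*(x+1)*iv * (k + a1*iv^2 - 4*a1*(x+1)^2*iv^3 - 2*a2*(x+1)*iv^2)
        + (-12*a1*(x+1)*iv^3 + 24*a1*(x+1)^3*iv^4 - 2*a2*iv^2 + 8*a2*(x+1)^2*iv^3))))
   = 8 * x * (be*(be-1) * (R * P) * iv^2)"
  using Rs unfolding rR be al k
  by algebra
lemma final_alg:
  fixes R P r x n al be k a1 a2 :: real
  assumes R: "R > 0" and rR: "r = R - (x+1)^2" and al: "al = -((n+1)/2)" and be: "be = al + 1" and k: "k = (n + 1 - 2)/2"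
  shows "-((8 + 2*n) * (P*(al/R*(k*(x-1) + a1*(x+1)/R^2 + a2/R) - 2*(a1*(x+1))/R^3 - a2/R^2))
     + 4*r*(P*(al/R*(al/R*(k*(x-1) + a1*(x+1)/R^2 + a2/R) - 2*(a1*(x+1))/R^3 - a2/R^2) + (- al/R^2*(k*(x-1) + a1*(x+1)/R^2 + a2/R) + al/R*(- 2*(a1*(x+1))/R^3 - a2/R^2) + 6*(a1*(x+1))/R^4 + 2*a2/R^3)))
     + P * (al*2*(x+1)/R * (al*2*(x+1)/R * (k*(x-1) + a1*(x+1)/R^2 + a2/R)
      + (k + a1/R^2 - 4*a1*(x+1)^2/R^3 - 2*a2*(x+1)/R^2))
     + (al*(2/R - 4*(x+1)^2/R^2) * (k*(x-1) + a1*(x+1)/R^2 + a2/R)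
        + al*2*(x+1)/R * (k + a1/R^2 - 4*a1*(x+1)^2/R^3 - 2*a2*(x+1)/R^2)
        + (-12*a1*(x+1)/R^3 + 24*a1*(x+1)^3/R^4 - 2*a2/R^2 + 8*a2*(x+1)^2/R^3))))
   = 8 * x * (be*(be-1) * (R * P) / R^2)"
proof -
  have "R * inverse R = 1" using R by simp
  from final_poly[OF this rR al be k, of P a1 a2]
  show ?thesis unfolding divide_inverse power_inverse .
qed




lemma line_deriv1:
  fixes R a be :: real
  assumes pos: "R > 0"
  shows "deriv (\<lambda>u. (R + 2*u*a + u^2) powr be) 0 = be * R powr be / R * (2*a)"
proof (rule DERIV_imp_deriv)
  have r: "((\<lambda>t. R + 2*t*a + t^2) has_real_derivative 2*a) (at 0)"
    by (rule derivative_eq_intros refl | simp)+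
  have w: "((\<lambda>p::real. p powr be) has_real_derivative be * R powr be / R) (at (R + 2*0*a + 0^2))"
    using W_d1[OF pos, of be] by simp
  show "((\<lambda>u. (R + 2*u*a + u^2) powr be) has_real_derivative be * R powr be / R * (2*a)) (at 0)"
    using DERIV_chain2[OF w r] by simp
qed

lemma pdiff_W10:
  fixes zb :: "real^'n::finite" and zN :: real
  assumes "zN > -1"
  shows "pdiff W10 (ebar j) (zb, zN) =
    (- ((real CARD('n) + 1) - 2) / 2) * (norm zb^2 + (zN+1)^2) powr (- ((real CARD('n) + 1) - 2) / 2)
      / (norm zb^2 + (zN+1)^2) * (2 * zb$j)"
proof -
  define be where "be = - ((real CARD('n) + 1) - 2) / 2"
  define \<rho> where "\<rho> = norm zb^2 + (zN+1)^2"
  have pos: "\<rho> > 0" using assms unfolding \<rho>_def by (simp add: add_nonneg_pos)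
  have line: "(\<lambda>u. W10 ((zb, zN) + u *\<^sub>R ebar j)) = (\<lambda>u. (\<rho> + 2*u*zb$j + u^2) powr be)"
  proof
    fix u
    have "W10 ((zb, zN) + u *\<^sub>R ebar j) = (norm (zb + u *\<^sub>R axis j 1)^2 + (zN+1)^2) powr be"
      by (simp add: W10_def ebar_def be_def)
    also have "\<dots> = (\<rho> + 2*u*zb$j + u^2) powr be"
      unfolding norm_line \<rho>_def by (simp add: algebra_simps)
    finally show "W10 ((zb, zN) + u *\<^sub>R ebar j) = (\<rho> + 2*u*zb$j + u^2) powr be" .
  qed
  have "deriv (\<lambda>u. (\<rho> + 2*u*zb$j + u^2) powr be) 0 = be * \<rho> powr be / \<rho> * (2 * zb$j)"
    by (rule line_deriv1[OF pos])
  then show ?thesis unfolding pdiff_def line be_def[symmetric] \<rho>_def[symmetric] .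
qed

lemma mixed_deriv:
  fixes R a b \<delta> be :: real
  assumes pos: "R > 0"
  shows "deriv (\<lambda>t. be * (R + 2*t*a + t^2) powr be / (R + 2*t*a + t^2) * (2 * (b + t * \<delta>))) 0
     = be*(be-1) * R powr be / R^2 * (2*a) * (2*b) + be * R powr be / R * (2 * \<delta>)"
proof (rule DERIV_imp_deriv)
  have r: "((\<lambda>t. R + 2*t*a + t^2) has_real_derivative 2*a) (at 0)"
    by (rule derivative_eq_intros refl | simp)+
  have w: "((\<lambda>p::real. be * p powr be / p) has_real_derivative be*(be-1) * R powr be / R^2) (at (R + 2*0*a + 0^2))"
    using W_d2[OF pos, of be] by simp
  have f: "((\<lambda>t. be * (R + 2*t*a + t^2) powr be / (R + 2*t*a + t^2)) has_real_derivative be*(be-1) * R powr be / R^2 * (2*a)) (at 0)"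
    using DERIV_chain2[OF w r] by simp
  have l: "((\<lambda>t. 2 * (b + t * \<delta>)) has_real_derivative 2 * \<delta>) (at 0)"
    by (rule derivative_eq_intros refl | simp)+
  from DERIV_mult[OF f l]
  show "((\<lambda>t. be * (R + 2*t*a + t^2) powr be / (R + 2*t*a + t^2) * (2 * (b + t * \<delta>))) has_real_derivative
     be*(be-1) * R powr be / R^2 * (2*a) * (2*b) + be * R powr be / R * (2 * \<delta>)) (at 0)"
    by (simp add: algebra_simps)
qed

lemma mixed_W10:
  fixes xb :: "real^'n::finite" and xN :: real
  assumes "xN > -1"
  defines "be \<equiv> - ((real CARD('n) + 1) - 2) / 2"
  defines "R \<equiv> norm xb^2 + (xN+1)^2"
  shows "pdiff (\<lambda>y. pdiff W10 (ebar j) y) (ebar i) (xb, xN) =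
    be*(be-1) * R powr be / R^2 * (2*xb$i) * (2*xb$j) + be * R powr be / R * (2 * (if j = i then 1 else 0))"
proof -
  have pos: "R > 0" using assms unfolding R_def by (simp add: add_nonneg_pos)
  have line: "(\<lambda>t. pdiff W10 (ebar j) ((xb, xN) + t *\<^sub>R ebar i))
     = (\<lambda>t. be * (R + 2*t*xb$i + t^2) powr be / (R + 2*t*xb$i + t^2) * (2 * (xb$j + t * (if j = i then 1 else 0))))"
  proof
    fix t
    have pt: "(xb, xN) + t *\<^sub>R ebar i = (xb + t *\<^sub>R axis i 1, xN)" by (simp add: ebar_def)
    have r: "norm (xb + t *\<^sub>R axis i 1)^2 + (xN+1)^2 = R + 2*t*xb$i + t^2"
      unfolding norm_line R_def by (simp add: algebra_simps)
    have c: "(xb + t *\<^sub>R axis i 1) $ j = xb$j + t * (if j = i then 1 else 0)"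
      by (simp add: axis_def)
    show "pdiff W10 (ebar j) ((xb, xN) + t *\<^sub>R ebar i) = be * (R + 2*t*xb$i + t^2) powr be / (R + 2*t*xb$i + t^2) * (2 * (xb$j + t * (if j = i then 1 else 0)))"
      unfolding pt pdiff_W10[OF assms(1)] r c be_def ..
  qed
  have "deriv (\<lambda>t. be * (R + 2*t*xb$i + t^2) powr be / (R + 2*t*xb$i + t^2) * (2 * (xb$j + t * (if j = i then 1 else 0)))) 0
     = be*(be-1) * R powr be / R^2 * (2*xb$i) * (2*xb$j) + be * R powr be / R * (2 * (if j = i then 1 else 0))"
    by (rule mixed_deriv[OF pos])
  then show ?thesis unfolding pdiff_def[of "\<lambda>y. pdiff W10 (ebar j) y"] line .
qed




lemma sum_combine:
  fixes d a c :: "'n::finite \<Rightarrow> real"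
  shows "(\<Sum>i\<in>UNIV. e * (2*d i*X + 4*a i*c i*Y + Q*(4*(a i)^2*Z + 2*Y)))
    = e * (2*X*(\<Sum>i\<in>UNIV. d i) + 4*Y*(\<Sum>i\<in>UNIV. a i * c i) + Q*(4*Z*(\<Sum>i\<in>UNIV. (a i)^2) + 2*Y*real CARD('n)))"
  by (simp add: sum.distrib sum_distrib_left sum_distrib_right algebra_simps)

lemma sum_xc:
  fixes xb :: "real^'n::finite" and \<pi> :: "real^'n^'n"
  shows "(\<Sum>i\<in>UNIV. xb$i * ((\<Sum>l\<in>UNIV. \<pi>$i$l * xb$l) + (\<Sum>k\<in>UNIV. \<pi>$k$i * xb$k)))
    = 2 * (\<Sum>k\<in>UNIV. \<Sum>l\<in>UNIV. \<pi>$k$l * xb$k * xb$l)"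
proof -
  have "(\<Sum>i\<in>UNIV. xb$i * (\<Sum>k\<in>UNIV. \<pi>$k$i * xb$k)) = (\<Sum>i\<in>UNIV. \<Sum>k\<in>UNIV. \<pi>$k$i * xb$k * xb$i)"
    by (simp add: sum_distrib_left mult_ac)
  also have "\<dots> = (\<Sum>k\<in>UNIV. \<Sum>l\<in>UNIV. \<pi>$k$l * xb$k * xb$l)"
    by (rule sum.swap)
  finally have 1: "(\<Sum>i\<in>UNIV. xb$i * (\<Sum>k\<in>UNIV. \<pi>$k$i * xb$k)) = (\<Sum>k\<in>UNIV. \<Sum>l\<in>UNIV. \<pi>$k$l * xb$k * xb$l)" .
  have 2: "(\<Sum>i\<in>UNIV. xb$i * (\<Sum>l\<in>UNIV. \<pi>$i$l * xb$l)) = (\<Sum>k\<in>UNIV. \<Sum>l\<in>UNIV. \<pi>$k$l * xb$k * xb$l)"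
    by (simp add: sum_distrib_left mult_ac)
  show ?thesis using 1 2 by (simp add: distrib_left sum.distrib)
qed

lemma sum_sq:
  fixes xb :: "real^'n::finite"
  shows "(\<Sum>i\<in>UNIV. (xb$i)^2) = norm xb ^ 2"
  unfolding power2_norm_eq_inner by (simp add: inner_vec_def power2_eq_square)

lemma sum_mixed:
  fixes xb :: "real^'n::finite" and \<pi> :: "real^'n^'n"
  assumes "trace \<pi> = 0"
  shows "(\<Sum>i\<in>UNIV. \<Sum>j\<in>UNIV. \<pi>$i$j * xN * (U * (2*xb$i) * (2*xb$j) + V * (2 * (if j = i then 1 else 0))))
    = 4 * xN * U * (\<Sum>k\<in>UNIV. \<Sum>l\<in>UNIV. \<pi>$k$l * xb$k * xb$l)"
proof -
  have "(\<Sum>i\<in>UNIV. \<Sum>j\<in>UNIV. \<pi>$i$j * xN * (U * (2*xb$i) * (2*xb$j) + V * (2 * (if j = i then 1 else 0))))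
     = (\<Sum>i\<in>UNIV. \<Sum>j\<in>UNIV. 4 * xN * U * (\<pi>$i$j * xb$i * xb$j)) + 2 * xN * V * trace \<pi>"
  proof -
    have e: "\<And>i j. \<pi>$i$j * xN * (U * (2*xb$i) * (2*xb$j) + V * (2 * (if j = i then 1 else 0)))
       = 4 * xN * U * (\<pi>$i$j * xb$i * xb$j) + (if j = i then 2 * xN * V * \<pi>$i$i else 0)"
      by (auto simp: algebra_simps)
    show ?thesis unfolding e sum.distrib by (simp add: trace_def sum_distrib_left)
  qed
  then show ?thesis using assms by (simp add: sum_distrib_left)
qed




lemma Phi_form:
  fixes zb :: "real^'n::finite"
  shows "Phi \<epsilon> \<pi> a1 a2 (zb, zN) = \<epsilon> * (\<Sum>k\<in>UNIV. \<Sum>l\<in>UNIV. \<pi>$k$l * zb$k * zb$l)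
     * ((norm zb ^ 2 + (zN + 1)^2) powr (- ((real CARD('n) + 1) / 2))
        * ((real CARD('n) + 1 - 2) / 2 * (zN - 1) + a1 * (zN + 1) / (norm zb ^ 2 + (zN + 1)^2)^2 + a2 / (norm zb ^ 2 + (zN + 1)^2)))"
proof -
  have m: "(norm zb ^ 2 + (zN + 1)^2) powr (- ((real CARD('n) + 1) / 2)) = inverse ((norm zb ^ 2 + (zN + 1)^2) powr ((real CARD('n) + 1) / 2))"
    by (rule powr_minus)
  show ?thesis unfolding Phi_def Let_def fst_conv snd_conv m
    by (simp only: divide_inverse mult.assoc)
qed




theorem lemma4p3:
  fixes \<epsilon> a1 a2 :: real and \<pi> :: "real^'n::finite^'n"
    and xb :: "real^'n" and xN :: real
  assumes "CARD('n) + 1 \<ge> 4"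
    and "\<epsilon> > 0"
    and "transpose \<pi> = \<pi>"
    and "trace \<pi> = 0"
    and "xN > 0"
  shows "- laplacian (Phi \<epsilon> \<pi> a1 a2) (xb, xN)
         = 2 * \<epsilon> * (\<Sum>i\<in>UNIV. \<Sum>j\<in>UNIV.
              \<pi> $ i $ j * xN * pdiff (\<lambda>y. pdiff W10 (ebar j) y) (ebar i) (xb, xN))"
proof -
  define n where "n = real CARD('n)"
  define al where "al = - ((real CARD('n) + 1) / 2)"
  define k where "k = (real CARD('n) + 1 - 2) / 2"
  define be where "be = - ((real CARD('n) + 1) - 2) / 2"
  define r where "r = norm xb ^ 2"
  define R where "R = r + (xN + 1)^2"
  define Q where "Q = (\<Sum>k\<in>UNIV. \<Sum>l\<in>UNIV. \<pi>$k$l * xb$k * xb$l)"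
  define c where "c = (\<lambda>i. (\<Sum>l\<in>UNIV. \<pi>$i$l * xb$l) + (\<Sum>k\<in>UNIV. \<pi>$k$i * xb$k))"
  define F where "F = (\<lambda>p::real. p powr al * (k*(xN-1) + a1*(xN+1) / p^2 + a2 / p))"
  define F1 where "F1 = (\<lambda>p::real. p powr al * (al/p * (k*(xN-1) + a1*(xN+1)/p^2 + a2/p) - 2*(a1*(xN+1))/p^3 - a2/p^2))"
  define F2 where "F2 = (\<lambda>p::real. p powr al * (al/p*(al/p*(k*(xN-1) + a1*(xN+1)/p^2 + a2/p) - 2*(a1*(xN+1))/p^3 - a2/p^2) + (- al/p^2*(k*(xN-1) + a1*(xN+1)/p^2 + a2/p) + al/p*(- 2*(a1*(xN+1))/p^3 - a2/p^2) + 6*(a1*(xN+1))/p^4 + 2*a2/p^3)))"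
  define g where "g = (\<lambda>v::real. r + (v+1)^2)"
  define H where "H = (\<lambda>v. g v powr al * (k*(v-1) + a1*(v+1)/(g v)^2 + a2/g v))"
  define H1 where "H1 = (\<lambda>v. g v powr al * (al*2*(v+1)/g v * (k*(v-1) + a1*(v+1)/(g v)^2 + a2/g v)
      + (k + a1/(g v)^2 - 4*a1*(v+1)^2/(g v)^3 - 2*a2*(v+1)/(g v)^2)))"
  define H2 where "H2 = (\<lambda>v. g v powr al * (al*2*(v+1)/g v * (al*2*(v+1)/g v * (k*(v-1) + a1*(v+1)/(g v)^2 + a2/g v)
      + (k + a1/(g v)^2 - 4*a1*(v+1)^2/(g v)^3 - 2*a2*(v+1)/(g v)^2))
     + (al*(2/g v - 4*(v+1)^2/(g v)^2) * (k*(v-1) + a1*(v+1)/(g v)^2 + a2/g v)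
        + al*2*(v+1)/g v * (k + a1/(g v)^2 - 4*a1*(v+1)^2/(g v)^3 - 2*a2*(v+1)/(g v)^2)
        + (-12*a1*(v+1)/(g v)^3 + 24*a1*(v+1)^3/(g v)^4 - 2*a2/(g v)^2 + 8*a2*(v+1)^2/(g v)^3))))"
  have xN: "xN > -1" using assms(5) by simp
  have r0: "r \<ge> 0" unfolding r_def by simp
  have Rpos: "R > 0" unfolding R_def using r0 assms(5) by (simp add: add_nonneg_pos)
  have Fd1: "\<And>p. p > 0 \<Longrightarrow> (F has_real_derivative F1 p) (at p)"
    unfolding F_def F1_def by (rule F_d1)
  have Fd2: "\<And>p. p > 0 \<Longrightarrow> (F1 has_real_derivative F2 p) (at p)"
    unfolding F1_def F2_def by (rule F_d2)
  have gd: "\<And>v. (g has_real_derivative 2*(v+1)) (at v)"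
    unfolding g_def by (rule derivative_eq_intros refl | simp)+
  have gpos: "\<And>v. v > -1 \<Longrightarrow> g v > 0"
    unfolding g_def using r0 by (simp add: add_nonneg_pos)
  have Hd1: "\<And>v. v > -1 \<Longrightarrow> (H has_real_derivative H1 v) (at v)"
    unfolding H_def H1_def by (rule H_d1_gen[OF gd gpos])
  have Hd2: "(H1 has_real_derivative H2 xN) (at xN)"
    unfolding H1_def H2_def by (rule H_d2_gen[OF gd gpos[OF xN]])
  have dir_i: "deriv (deriv (\<lambda>t. Phi \<epsilon> \<pi> a1 a2 ((xb, xN) + t *\<^sub>R ebar i))) 0
      = \<epsilon> * (2*\<pi>$i$i*F R + 4*xb$i*c i*F1 R + Q*(4*(xb$i)^2*F2 R + 2*F1 R))" for i
  proof -
    have eq: "(\<lambda>t. Phi \<epsilon> \<pi> a1 a2 ((xb, xN) + t *\<^sub>R ebar i))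
       = (\<lambda>t. \<epsilon> * (Q + t*c i + t^2*\<pi>$i$i) * F (R + 2*t*xb$i + t^2))"
    proof
      fix t
      have pt: "(xb, xN) + t *\<^sub>R ebar i = (xb + t *\<^sub>R axis i 1, xN)" by (simp add: ebar_def)
      have \<rho>: "norm (xb + t *\<^sub>R axis i 1)^2 + (xN+1)^2 = R + 2*t*xb$i + t^2"
        unfolding norm_line R_def r_def by (simp add: algebra_simps)
      show "Phi \<epsilon> \<pi> a1 a2 ((xb, xN) + t *\<^sub>R ebar i) = \<epsilon> * (Q + t*c i + t^2*\<pi>$i$i) * F (R + 2*t*xb$i + t^2)"
        unfolding pt Phi_form quad_line \<rho> F_def al_def k_def Q_def c_def ..
    qed
    have pos: "\<And>t. R + 2*t*xb$i + t^2 > 0"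
    proof -
      fix t
      have "R + 2*t*xb$i + t^2 = norm (xb + t *\<^sub>R axis i 1)^2 + (xN+1)^2"
        unfolding norm_line R_def r_def by (simp add: algebra_simps)
      also have "\<dots> > 0" using assms(5) by (simp add: add_nonneg_pos)
      finally show "R + 2*t*xb$i + t^2 > 0" .
    qed
    show ?thesis unfolding eq by (rule second_deriv_line[OF Fd1 Fd2 pos])
  qed
  have dir_N: "deriv (deriv (\<lambda>t. Phi \<epsilon> \<pi> a1 a2 ((xb, xN) + t *\<^sub>R (0, 1)))) 0 = \<epsilon> * Q * H2 xN"
  proof -
    have eq: "(\<lambda>t. Phi \<epsilon> \<pi> a1 a2 ((xb, xN) + t *\<^sub>R (0, 1))) = (\<lambda>t. \<epsilon> * Q * H (xN + t))"
    proof
      fix t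
      show "Phi \<epsilon> \<pi> a1 a2 ((xb, xN) + t *\<^sub>R (0, 1)) = \<epsilon> * Q * H (xN + t)"
      proof -
        have pt: "(xb, xN) + t *\<^sub>R (0::real^'n, 1::real) = (xb, xN + t)" by simp
        show ?thesis unfolding pt Phi_form H_def g_def al_def k_def Q_def r_def ..
      qed
    qed
    show ?thesis unfolding eq by (rule second_deriv_N[where H=H and ?H1.0=H1 and ?H2.0=H2, OF Hd1 Hd2 xN])
  qed
  have sxc: "(\<Sum>i\<in>UNIV. xb$i * c i) = 2 * Q"
    unfolding c_def Q_def by (rule sum_xc)
  have LHS: "laplacian (Phi \<epsilon> \<pi> a1 a2) (xb, xN)
     = \<epsilon> * (4*F1 R*(2*Q) + Q*(4*F2 R*r + 2*F1 R*n)) + \<epsilon> * Q * H2 xN"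
    unfolding laplacian_split dir_i dir_N sum_combine sxc sum_sq
    using assms(4) by (simp add: trace_def r_def n_def)
  have RHS: "(\<Sum>i\<in>UNIV. \<Sum>j\<in>UNIV. \<pi> $ i $ j * xN * pdiff (\<lambda>y. pdiff W10 (ebar j) y) (ebar i) (xb, xN))
     = 4 * xN * (be*(be-1) * R powr be / R^2) * Q"
    unfolding mixed_W10[OF xN] sum_mixed[OF assms(4)]
    by (simp add: be_def R_def r_def Q_def)
  have be1: "be = al + 1" unfolding be_def al_def by (simp add: field_simps)
  have beal: "R powr be = R * R powr al"
    using be1 Rpos by (simp add: powr_add)
  have rR: "r = R - (xN+1)^2" unfolding R_def by simp
  have aln: "al = -((n+1)/2)" unfolding al_def n_def ..
  have kn: "k = (n + 1 - 2)/2" unfolding k_def n_def ..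
  have gR: "g xN = R" unfolding g_def R_def ..
  have key: "-((8 + 2*n) * F1 R + 4*r*F2 R + H2 xN) = 8 * xN * (be*(be-1) * (R * R powr al) / R^2)"
    unfolding F1_def F2_def H2_def gR
    by (rule final_alg[OF Rpos rR aln be1 kn])
  have "- (\<epsilon> * (4*F1 R*(2*Q) + Q*(4*F2 R*r + 2*F1 R*n)) + \<epsilon> * Q * H2 xN)
     = \<epsilon> * Q * (-((8 + 2*n) * F1 R + 4*r*F2 R + H2 xN))"
    by (simp add: algebra_simps)
  also have "\<dots> = \<epsilon> * Q * (8 * xN * (be*(be-1) * (R * R powr al) / R^2))"
    unfolding key ..
  also have "\<dots> = 2 * \<epsilon> * (4 * xN * (be*(be-1) * (R * R powr al) / R^2) * Q)"
    by (simp add: algebra_simps)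
  finally show ?thesis
    unfolding LHS RHS beal .
qed


end
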